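(* Under the setting described in the context, let $\mathcal{K}$ be an arbitrary set of policies. Then \[ M_{1}\cap \mathcal{K}\subseteq \Pi (M_{2}\cap \mathcal{K})\subseteq M_{1}\cap \Pi (\mathcal{K})\subseteq M_{1}. \] In particular, taking $\mathcal{K}$ to be the set of all policies, $\Pi(M_2)=M_1$.
   Context: Let $T\ge 2$, $M\ge 1$ and $n_1,\dots,n_T\ge 1$ be integers. Let $\xi=(\xi_1,\dots,\xi_T)$ be a random vector with values in $\mathbb{R}^{MT}$, $\xi_t\in\mathbb{R}^M$, defined on a probability space $(\Omega,\mathcal{A},\mathbb{P})$, and write $\xi_{1:t}:=(\xi_1,\dots,\xi_t)$. A policy is a tuple $y=(y_t)_{t=1}^T$ where $y_1\in\mathbb{R}^{n_1}$ is deterministic and, for $t\ge 2$, $y_t:\mathbb{R}^{M(t-1)}\to\mathbb{R}^{n_t}$ is Borel measurable; $y_t$ is evaluated at $\xi_{1:t-1}$ (with $y_1(\xi_{1:0}):=y_1$). For $t=1,\dots,T$, $\tau=1,\dots,t$ and $k\in\{2,3\}$ let $A^{(k)}_{t,\tau}$, $B^{(k)}_{t,\tau}$ be given real matrices and $b^{(k)}_t$ given vectors of compatible sizes, with $B^{(3)}_{t,t}=0$ for all $t$. Fix $p\in(0,1]$. Define $M_1$ = set of policies $y$ such that (i) $\mathbb{P}\big(\sum_{\tau=1}^t A^{(2)}_{t,\tau}y_\tau(\xi_{1:\tau-1})+\sum_{\tau=1}^t B^{(2)}_{t,\tau}\xi_\tau\le b^{(2)}_t,\ t=1,\dots,T\big)\ge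 p$ and (ii) $\sum_{\tau=1}^t A^{(3)}_{t,\tau}y_\tau(\xi_{1:\tau-1})+\sum_{\tau=1}^{t-1} B^{(3)}_{t,\tau}\xi_\tau\le b^{(3)}_t$ for $t=1,\dots,T$, $\mathbb{P}$-almost surely; $M_2$ = set of policies $y$ such that $\mathbb{P}\big(\text{for all } t=1,\dots,T:\ \sum_{\tau=1}^t A^{(2)}_{t,\tau}y_\tau(\xi_{1:\tau-1})+\sum_{\tau=1}^t B^{(2)}_{t,\tau}\xi_\tau\le b^{(2)}_t \text{ and } \sum_{\tau=1}^t A^{(3)}_{t,\tau}y_\tau(\xi_{1:\tau-1})+\sum_{\tau=1}^{t-1} B^{(3)}_{t,\tau}\xi_\tau\le b^{(3)}_t\big)\ge p$. For vectors $z_1,\dots,z_{t-1}$ ($z_\tau\in\mathbb{R}^{n_\tau}$) and $\xi_{1:t-1}$ let $X_t(z_{1:t-1},\xi_{1:t-1}):=\{u\in\mathbb{R}^{n_t}: A^{(3)}_{t,t}u\le b^{(3)}_t-\sum_{\tau=1}^{t-1}B^{(3)}_{t,\tau}\xi_\tau-\sum_{\tau=1}^{t-1}A^{(3)}_{t,\tau}z_\tau\}$; it is assumed that all these polyhedra are nonempty, so the Euclidean projection $\pi_{X}$ onto each of them is well defined. The operator $\Pi$ maps a policy $y$ to $z=\Pi(y)$ defined recursively by $z_1:=\pi_{X_1}(y_1)$ and $z_t(\xi_{1:t-1}):=\pi_{X_t(z_1,z_2(\xi_1),\dots,z_{t-1}(\xi_{1:t-2}),\xi_{1:t-1})}(y_t(\xi_{1:t-1}))$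 for every $\xi_{1:t-1}$ and $t=2,\dots,T$; it is assumed that $\Pi(y)$ is again a policy (Borel measurable). For a set $\mathcal{K}$ of policies, $\Pi(\mathcal{K}):=\{\Pi(y):y\in\mathcal{K}\}$. *)

theory Defs
  imports "HOL-Probability.Probability"
begin

text \<open>Time indices t range over 1..T. A vector of R^k is an extensional
function nat => real supported on {..<k}. The noise path is g :: nat => nat => real with
g tau j the j-th component of xi_tau (tau in 1..T, j < M). The history xi_{1:t-1} is the
restriction of g to {1..<t}; R^{M(t-1)} is modelled (with its Borel sigma-algebra) as the
finite product space over {1..<t} of copies of R^M.\<close>

definition vec_space :: "nat \<Rightarrow> (nat \<Rightarrow> real) set" where
  "vec_space k = ({..<k} \<rightarrow>\<^sub>E (UNIV :: real set))"

definition vec_M :: "nat \<Rightarrow> (nat \<Rightarrow> real) measure" where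
  "vec_M k = (\<Pi>\<^sub>M i\<in>{..<k}. (borel :: real measure))"

definition hist_M :: "nat \<Rightarrow> nat \<Rightarrow> (nat \<Rightarrow> nat \<Rightarrow> real) measure" where
  "hist_M M t = (\<Pi>\<^sub>M tau\<in>{1..<t}. vec_M M)"

definition hist :: "(nat \<Rightarrow> nat \<Rightarrow> real) \<Rightarrow> nat \<Rightarrow> (nat \<Rightarrow> nat \<Rightarrow> real)" where
  "hist g t = restrict g {1..<t}"

type_synonym policy = "nat \<Rightarrow> (nat \<Rightarrow> nat \<Rightarrow> real) \<Rightarrow> (nat \<Rightarrow> real)"

text \<open>A policy: y t is a Borel map R^{M(t-1)} -> R^{n_t}; for t = 1 the domain is a
one-point space, so y 1 is a deterministic vector.\<close>
definition is_policy :: "nat \<Rightarrow> nat \<Rightarrow> (nat \<Rightarrow> nat) \<Rightarrow> policy \<Rightarrow> bool" where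
  "is_policy T M n y \<longleftrightarrow> (\<forall>t\<in>{1..T}. y t \<in> hist_M M t \<rightarrow>\<^sub>M vec_M (n t))"

text \<open>A constraint system (k = 2 or k = 3): number of rows m_t, matrices A_{t,tau}
(entries A t tau i j), B_{t,tau} (entries B t tau i j) and right-hand sides b_t (b t i).\<close>
record csys =
  rows :: "nat \<Rightarrow> nat"
  Amat :: "nat \<Rightarrow> nat \<Rightarrow> nat \<Rightarrow> nat \<Rightarrow> real"
  Bmat :: "nat \<Rightarrow> nat \<Rightarrow> nat \<Rightarrow> nat \<Rightarrow> real"
  bvec :: "nat \<Rightarrow> nat \<Rightarrow> real"

definition sat2 :: "nat \<Rightarrow> nat \<Rightarrow> (nat \<Rightarrow> nat) \<Rightarrow> csys \<Rightarrow> policy \<Rightarrow> (nat \<Rightarrow> nat \<Rightarrow> real) \<Rightarrow> bool" where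
  "sat2 T M n C y g \<longleftrightarrow> (\<forall>t\<in>{1..T}. \<forall>i<rows C t.
     (\<Sum>tau\<in>{1..t}. \<Sum>j<n tau. Amat C t tau i j * y tau (hist g tau) j)
     + (\<Sum>tau\<in>{1..t}. \<Sum>j<M. Bmat C t tau i j * g tau j) \<le> bvec C t i)"

definition sat3 :: "nat \<Rightarrow> nat \<Rightarrow> (nat \<Rightarrow> nat) \<Rightarrow> csys \<Rightarrow> policy \<Rightarrow> (nat \<Rightarrow> nat \<Rightarrow> real) \<Rightarrow> bool" where
  "sat3 T M n C y g \<longleftrightarrow> (\<forall>t\<in>{1..T}. \<forall>i<rows C t.
     (\<Sum>tau\<in>{1..t}. \<Sum>j<n tau. Amat C t tau i j * y tau (hist g tau) j)
     + (\<Sum>tau\<in>{1..<t}. \<Sum>j<M. Bmat C t tau i j * g tau j) \<le> bvec C t i)"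

definition M1set :: "nat \<Rightarrow> nat \<Rightarrow> (nat \<Rightarrow> nat) \<Rightarrow> csys \<Rightarrow> csys \<Rightarrow> 'a measure
    \<Rightarrow> ('a \<Rightarrow> nat \<Rightarrow> nat \<Rightarrow> real) \<Rightarrow> real \<Rightarrow> policy set" where
  "M1set T M n C2 C3 P xi p = {y. is_policy T M n y
     \<and> measure P {\<omega> \<in> space P. sat2 T M n C2 y (xi \<omega>)} \<ge> p
     \<and> (AE \<omega> in P. sat3 T M n C3 y (xi \<omega>))}"

definition M2set :: "nat \<Rightarrow> nat \<Rightarrow> (nat \<Rightarrow> nat) \<Rightarrow> csys \<Rightarrow> csys \<Rightarrow> 'a measure
    \<Rightarrow> ('a \<Rightarrow> nat \<Rightarrow> nat \<Rightarrow> real) \<Rightarrow> real \<Rightarrow> policy set" where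
  "M2set T M n C2 C3 P xi p = {y. is_policy T M n y
     \<and> measure P {\<omega> \<in> space P. sat2 T M n C2 y (xi \<omega>) \<and> sat3 T M n C3 y (xi \<omega>)} \<ge> p}"

definition edist :: "nat \<Rightarrow> (nat \<Rightarrow> real) \<Rightarrow> (nat \<Rightarrow> real) \<Rightarrow> real" where
  "edist k u v = sqrt (\<Sum>i<k. (u i - v i)\<^sup>2)"

definition proj :: "nat \<Rightarrow> (nat \<Rightarrow> real) set \<Rightarrow> (nat \<Rightarrow> real) \<Rightarrow> (nat \<Rightarrow> real)" where
  "proj k X u = (THE v. v \<in> X \<and> (\<forall>w\<in>X. edist k v u \<le> edist k w u))"

definition Xset :: "nat \<Rightarrow> (nat \<Rightarrow> nat) \<Rightarrow> csys \<Rightarrow> nat \<Rightarrow> (nat \<Rightarrow> nat \<Rightarrow> real)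
    \<Rightarrow> (nat \<Rightarrow> nat \<Rightarrow> real) \<Rightarrow> (nat \<Rightarrow> real) set" where
  "Xset M n C t z h = {u \<in> vec_space (n t). \<forall>i<rows C t.
     (\<Sum>j<n t. Amat C t t i j * u j) \<le> bvec C t i
       - (\<Sum>tau\<in>{1..<t}. \<Sum>j<M. Bmat C t tau i j * h tau j)
       - (\<Sum>tau\<in>{1..<t}. \<Sum>j<n tau. Amat C t tau i j * z tau j)}"

text \<open>zacc ... y g k tau = z_tau(xi_{1:tau-1}) for tau in 1..k, computed along path g.\<close>
primrec zacc :: "nat \<Rightarrow> (nat \<Rightarrow> nat) \<Rightarrow> csys \<Rightarrow> policy \<Rightarrow> (nat \<Rightarrow> nat \<Rightarrow> real)
    \<Rightarrow> nat \<Rightarrow> nat \<Rightarrow> (nat \<Rightarrow> real)" where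
  "zacc M n C y g 0 = (\<lambda>_. undefined)"
| "zacc M n C y g (Suc k) = (zacc M n C y g k)(Suc k :=
     proj (n (Suc k)) (Xset M n C (Suc k) (zacc M n C y g k) (hist g (Suc k)))
          (y (Suc k) (hist g (Suc k))))"

definition PiOp :: "nat \<Rightarrow> (nat \<Rightarrow> nat) \<Rightarrow> csys \<Rightarrow> policy \<Rightarrow> policy" where
  "PiOp M n C y = (\<lambda>t h. zacc M n C y h t t)"

definition ae_eq_policy :: "nat \<Rightarrow> 'a measure \<Rightarrow> ('a \<Rightarrow> nat \<Rightarrow> nat \<Rightarrow> real)
    \<Rightarrow> policy \<Rightarrow> policy \<Rightarrow> bool" where
  "ae_eq_policy T P xi y z \<longleftrightarrow>
     (\<forall>t\<in>{1..T}. AE \<omega> in P. y t (hist (xi \<omega>) t) = z t (hist (xi \<omega>) t))"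

definition ae_subset :: "nat \<Rightarrow> 'a measure \<Rightarrow> ('a \<Rightarrow> nat \<Rightarrow> nat \<Rightarrow> real)
    \<Rightarrow> policy set \<Rightarrow> policy set \<Rightarrow> bool" where
  "ae_subset T P xi A B \<longleftrightarrow> (\<forall>y\<in>A. \<exists>z\<in>B. ae_eq_policy T P xi y z)"

end

theory Submission
  imports Defs
begin



definition sqd :: "nat \<Rightarrow> (nat \<Rightarrow> real) \<Rightarrow> (nat \<Rightarrow> real) \<Rightarrow> real" where
  "sqd k v u = (\<Sum>i<k. (v i - u i)^2)"

lemma closedin_all_le:
  fixes m :: nat
  assumes "\<And>i. i<m \<Longrightarrow> continuous_map X euclideanreal (f i)"
  shows "closedin X {x\<in>topspace X. \<forall>i<m. f i x \<le> c i}"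
  using assms
proof (induction m)
  case 0
  then show ?case by simp
next
  case (Suc m)
  have eq: "{x\<in>topspace X. \<forall>i<Suc m. f i x \<le> c i} =
     {x\<in>topspace X. \<forall>i<m. f i x \<le> c i} \<inter> {x\<in>topspace X. f m x \<in> {..c m}}"
    by (auto simp: less_Suc_eq)
  show ?case unfolding eq
    by (intro closedin_Int Suc closedin_continuous_map_preimage[where Y=euclideanreal]) auto
qed

lemma closest_exists:
  fixes a :: "nat \<Rightarrow> nat \<Rightarrow> real" and m :: nat
  assumes X: "X = {w \<in> vec_space k. \<forall>i<m. (\<Sum>j<k. a i j * w j) \<le> c i}" and ne: "X \<noteq> {}"
  shows "\<exists>v\<in>X. \<forall>w\<in>X. sqd k v u \<le> sqd k w u"
proof -
  define PT where "PT = product_topology (\<lambda>_. euclideanreal) {..<k}"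
  have top: "topspace PT = vec_space k"
    by (simp add: PT_def vec_space_def)
  obtain w0 where w0: "w0 \<in> X" using ne by auto
  define r where "r = sqrt (sqd k w0 u)"
  define S where "S = {w\<in>topspace PT. \<forall>i<m. (\<Sum>j<k. a i j * w j) \<le> c i} \<inter>
                      {w\<in>topspace PT. \<forall>j<k. \<bar>w j - u j\<bar> \<le> r}"
  have proj: "continuous_map PT euclideanreal (\<lambda>w. w j)" if "j < k" for j
    unfolding PT_def using that by (intro continuous_map_product_projection) auto
  have cl: "closedin PT S"
    unfolding S_def
    by (intro closedin_Int closedin_all_le continuous_map_sum continuous_map_real_mult_left
          continuous_map_real_abs continuous_map_diff proj) auto
  have box: "compactin PT (PiE {..<k} (\<lambda>j. {u j - r .. u j + r}))"
    unfolding PT_def by (subst compactin_PiE) auto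
  have Ssub: "S \<subseteq> PiE {..<k} (\<lambda>j. {u j - r .. u j + r})"
    unfolding S_def top vec_space_def by (auto simp: abs_le_iff)
  have cS: "compactin PT S" by (rule closed_compactin[OF box Ssub cl])
  have cont: "continuous_map PT euclideanreal (\<lambda>w. sqd k w u)"
    unfolding sqd_def by (intro continuous_map_sum continuous_map_real_pow continuous_map_diff proj) auto
  have "compactin euclideanreal ((\<lambda>w. sqd k w u) ` S)"
    by (rule image_compactin[OF cS cont])
  hence cimg: "compact ((\<lambda>w. sqd k w u) ` S)" by simp
  have w0le: "\<bar>w0 j - u j\<bar> \<le> r" if "j < k" for j
  proof -
    have "(w0 j - u j)^2 \<le> sqd k w0 u"
      unfolding sqd_def using that by (intro member_le_sum) auto
    thus ?thesis unfolding r_def by (simp add: real_le_rsqrt)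
  qed
  have w0S: "w0 \<in> S" using w0 w0le unfolding S_def X top by auto
  obtain s where s: "s \<in> (\<lambda>w. sqd k w u) ` S" "\<forall>t\<in>(\<lambda>w. sqd k w u) ` S. s \<le> t"
    using compact_attains_inf[OF cimg] w0S by blast
  then obtain v where v: "v \<in> S" "s = sqd k v u" by auto
  have vX: "v \<in> X" using v unfolding S_def X top by auto
  show ?thesis
  proof (intro bexI[OF _ vX] ballI)
    fix w assume wX: "w \<in> X"
    show "sqd k v u \<le> sqd k w u"
    proof (cases "w \<in> S")
      case True thus ?thesis using s v by auto
    next
      case False
      then obtain j where j: "j < k" "\<bar>w j - u j\<bar> > r" using wX unfolding S_def X top by auto
      have r0: "r \<ge> 0" unfolding r_def sqd_def by (auto intro: sum_nonneg)
      have "r^2 < (w j - u j)^2"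
        using j r0 by (metis abs_ge_zero abs_of_nonneg power2_abs power_strict_mono zero_less_numeral)
      also have "\<dots> \<le> sqd k w u" unfolding sqd_def using j by (intro member_le_sum) auto
      finally have "sqd k w0 u < sqd k w u"
        unfolding r_def by (simp add: sqd_def sum_nonneg)
      moreover have "sqd k v u \<le> sqd k w0 u" using s v w0S by auto
      ultimately show ?thesis by simp
    qed
  qed
qed

lemma vec_space_ext:
  assumes "v \<in> vec_space k" "w \<in> vec_space k" "\<And>j. j < k \<Longrightarrow> v j = w j"
  shows "v = w"
  using assms unfolding vec_space_def by (auto intro: PiE_ext)

lemma closest_unique:
  fixes a :: "nat \<Rightarrow> nat \<Rightarrow> real" and m :: nat
  assumes X: "X = {w \<in> vec_space k. \<forall>i<m. (\<Sum>j<k. a i j * w j) \<le> c i}"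
    and v: "v \<in> X" "\<forall>w\<in>X. sqd k v u \<le> sqd k w u"
    and w: "w \<in> X" "\<forall>w'\<in>X. sqd k w u \<le> sqd k w' u"
  shows "v = w"
proof -
  define mid where "mid = (\<lambda>i. (v i + w i) / 2)"
  have vv: "v \<in> vec_space k" and ww: "w \<in> vec_space k" using v w X by auto
  have "mid \<in> vec_space k"
    using vv ww unfolding vec_space_def mid_def PiE_def extensional_def by auto
  moreover have "(\<Sum>j<k. a i j * mid j) \<le> c i" if "i < m" for i
  proof -
    have "(\<Sum>j<k. a i j * mid j) = ((\<Sum>j<k. a i j * v j) + (\<Sum>j<k. a i j * w j)) / 2"
      unfolding mid_def by (simp add: sum_divide_distrib[symmetric] sum.distrib[symmetric] algebra_simps)
    moreover have "(\<Sum>j<k. a i j * v j) \<le> c i" "(\<Sum>j<k. a i j * w j) \<le> c i"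
      using v w X that by auto
    ultimately show ?thesis by (simp add: field_simps)
  qed
  ultimately have midX: "mid \<in> X" using X by auto
  have eqd: "sqd k v u = sqd k w u" using v w by (meson order_antisym)
  have "sqd k mid u = (\<Sum>j<k. ((v j - u j)^2 + (w j - u j)^2) / 2 - (v j - w j)^2 / 4)"
    unfolding sqd_def mid_def by (intro sum.cong refl) (simp add: power2_eq_square field_simps)
  also have "\<dots> = (sqd k v u + sqd k w u) / 2 - (\<Sum>j<k. (v j - w j)^2) / 4"
    unfolding sqd_def by (simp add: sum_subtractf sum_divide_distrib[symmetric] sum.distrib)
  finally have "sqd k mid u = (sqd k v u + sqd k w u) / 2 - (\<Sum>j<k. (v j - w j)^2) / 4" .
  moreover have "sqd k v u \<le> sqd k mid u" using v midX by auto
  ultimately have "(\<Sum>j<k. (v j - w j)^2) \<le> 0" using eqd by simp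
  hence "(\<Sum>j<k. (v j - w j)^2) = 0" by (simp add: order_antisym sum_nonneg)
  hence "\<forall>j\<in>{..<k}. (v j - w j)^2 = 0" by (subst (asm) sum_nonneg_eq_0_iff) auto
  thus ?thesis using vv ww by (intro vec_space_ext) auto
qed

lemma edist_le_iff: "edist k v u \<le> edist k w u \<longleftrightarrow> sqd k v u \<le> sqd k w u"
  unfolding edist_def sqd_def by simp

lemma proj_in:
  fixes a :: "nat \<Rightarrow> nat \<Rightarrow> real" and m :: nat
  assumes X: "X = {w \<in> vec_space k. \<forall>i<m. (\<Sum>j<k. a i j * w j) \<le> c i}" and ne: "X \<noteq> {}"
  shows "proj k X u \<in> X"
proof -
  obtain v where v: "v \<in> X" "\<forall>w\<in>X. sqd k v u \<le> sqd k w u"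
    using closest_exists[OF X ne] by blast
  have "proj k X u = v"
    unfolding proj_def edist_le_iff
  proof (rule the_equality)
    show "v \<in> X \<and> (\<forall>w\<in>X. sqd k v u \<le> sqd k w u)" using v by auto
    fix w assume "w \<in> X \<and> (\<forall>w'\<in>X. sqd k w u \<le> sqd k w' u)"
    thus "w = v" using closest_unique[OF X v] by auto
  qed
  thus ?thesis using v by simp
qed

lemma proj_self:
  assumes sub: "X \<subseteq> vec_space k" and u: "u \<in> X"
  shows "proj k X u = u"
  unfolding proj_def edist_le_iff
proof (rule the_equality)
  show "u \<in> X \<and> (\<forall>w\<in>X. sqd k u u \<le> sqd k w u)"
    using u by (auto simp: sqd_def intro: sum_nonneg)
  fix w assume w: "w \<in> X \<and> (\<forall>w'\<in>X. sqd k w u \<le> sqd k w' u)"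
  hence "sqd k w u \<le> 0" using u by (auto simp: sqd_def)
  hence "(\<Sum>j<k. (w j - u j)^2) = 0" by (simp add: order_antisym sum_nonneg sqd_def)
  hence "\<forall>j\<in>{..<k}. (w j - u j)^2 = 0" by (subst (asm) sum_nonneg_eq_0_iff) auto
  thus "w = u" using w u sub by (intro vec_space_ext) auto
qed




lemma zacc_stable: "tau \<le> k \<Longrightarrow> zacc M n C y g k tau = zacc M n C y g tau tau"
  by (induction k) (auto simp: le_Suc_eq)

lemma hist_hist: "tau \<le> t \<Longrightarrow> hist (hist g t) tau = hist g tau"
  unfolding hist_def by (auto simp: restrict_def fun_eq_iff)

lemma zacc_hist: "k \<le> t \<Longrightarrow> zacc M n C y (hist g t) k = zacc M n C y g k"
  by (induction k) (auto simp: hist_hist)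

lemma PiOp_eval: "PiOp M n C y t (hist g t) = zacc M n C y g t t"
  unfolding PiOp_def by (simp add: zacc_hist)

definition good :: "nat \<Rightarrow> nat \<Rightarrow> (nat \<Rightarrow> nat \<Rightarrow> real) \<Rightarrow> bool" where
  "good T M g \<longleftrightarrow> (\<forall>tau\<in>{1..T}. g tau \<in> vec_space M)"

lemma space_vec_M: "space (vec_M k) = vec_space k"
  unfolding vec_M_def vec_space_def by (simp add: space_PiM)

lemma hist_space: "good T M g \<Longrightarrow> t \<le> T \<Longrightarrow> hist g t \<in> space (hist_M M t)"
  unfolding hist_M_def hist_def good_def by (auto simp: space_PiM space_vec_M)

lemma y_vec: "is_policy T M n y \<Longrightarrow> t \<in> {1..T} \<Longrightarrow> h \<in> space (hist_M M t) \<Longrightarrow> y t h \<in> vec_space (n t)"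
  unfolding is_policy_def using measurable_space space_vec_M by metis

lemma sum_split_last: "1 \<le> (t::nat) \<Longrightarrow> sum F {1..t} = sum F {1..<t} + (F t :: real)"
  by (cases t) (auto simp: sum.cl_ivl_Suc atLeastLessThanSuc_atLeastAtMost)

lemma hist_at: "tau \<in> {1..<t} \<Longrightarrow> hist g t tau = g tau"
  unfolding hist_def by simp

lemma Z_in:
  assumes ne: "\<forall>t\<in>{1..T}. \<forall>z h. (\<forall>tau\<in>{1..<t}. z tau \<in> vec_space (n tau))
           \<longrightarrow> h \<in> space (hist_M M t) \<longrightarrow> Xset M n C t z h \<noteq> {}"
    and g: "good T M g"
  shows "k \<le> T \<Longrightarrow> \<forall>tau\<in>{1..k}. zacc M n C y g tau tau \<in> Xset M n C tau (zacc M n C y g (tau - 1)) (hist g tau)"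
proof (induction k)
  case 0
  then show ?case by simp
next
  case (Suc k)
  have IH: "\<forall>tau\<in>{1..k}. zacc M n C y g tau tau \<in> Xset M n C tau (zacc M n C y g (tau - 1)) (hist g tau)"
    using Suc by simp
  have vs: "\<forall>tau\<in>{1..<Suc k}. zacc M n C y g k tau \<in> vec_space (n tau)"
  proof
    fix tau assume tau: "tau \<in> {1..<Suc k}"
    hence "zacc M n C y g k tau = zacc M n C y g tau tau" by (intro zacc_stable) auto
    moreover have "zacc M n C y g tau tau \<in> Xset M n C tau (zacc M n C y g (tau - 1)) (hist g tau)"
      using IH tau by auto
    ultimately show "zacc M n C y g k tau \<in> vec_space (n tau)" unfolding Xset_def by auto
  qed
  have "Xset M n C (Suc k) (zacc M n C y g k) (hist g (Suc k)) \<noteq> {}"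
    using ne Suc.prems vs hist_space[OF g Suc.prems] by auto
  hence "proj (n (Suc k)) (Xset M n C (Suc k) (zacc M n C y g k) (hist g (Suc k))) (y (Suc k) (hist g (Suc k)))
        \<in> Xset M n C (Suc k) (zacc M n C y g k) (hist g (Suc k))"
    by (intro proj_in[OF Xset_def]) 
  thus ?case using IH by (auto simp: le_Suc_eq)
qed




lemma sat3_PiOp:
  assumes ne: "\<forall>t\<in>{1..T}. \<forall>z h. (\<forall>tau\<in>{1..<t}. z tau \<in> vec_space (n tau))
           \<longrightarrow> h \<in> space (hist_M M t) \<longrightarrow> Xset M n C t z h \<noteq> {}"
    and g: "good T M g"
  shows "sat3 T M n C (PiOp M n C y) g"
  unfolding sat3_def PiOp_eval
proof (intro ballI allI impI)
  fix t i assume t: "t \<in> {1..T}" and i: "i < rows C t"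
  let ?Z = "\<lambda>tau. zacc M n C y g tau tau"
  have "?Z t \<in> Xset M n C t (zacc M n C y g (t - 1)) (hist g t)"
    using Z_in[OF ne g, of T y] t by auto
  hence le: "(\<Sum>j<n t. Amat C t t i j * ?Z t j) \<le> bvec C t i
       - (\<Sum>tau\<in>{1..<t}. \<Sum>j<M. Bmat C t tau i j * hist g t tau j)
       - (\<Sum>tau\<in>{1..<t}. \<Sum>j<n tau. Amat C t tau i j * zacc M n C y g (t - 1) tau j)"
    unfolding Xset_def using i by auto
  have e1: "(\<Sum>tau\<in>{1..<t}. \<Sum>j<M. Bmat C t tau i j * hist g t tau j)
          = (\<Sum>tau\<in>{1..<t}. \<Sum>j<M. Bmat C t tau i j * g tau j)"
    by (intro sum.cong refl) (simp add: hist_at)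
  have e2: "(\<Sum>tau\<in>{1..<t}. \<Sum>j<n tau. Amat C t tau i j * zacc M n C y g (t - 1) tau j)
          = (\<Sum>tau\<in>{1..<t}. \<Sum>j<n tau. Amat C t tau i j * ?Z tau j)"
  proof (intro sum.cong refl)
    fix tau j assume "tau \<in> {1..<t}"
    hence "zacc M n C y g (t - 1) tau = ?Z tau" by (intro zacc_stable) auto
    thus "Amat C t tau i j * zacc M n C y g (t - 1) tau j = Amat C t tau i j * ?Z tau j" by simp
  qed
  have t1: "1 \<le> t" using t by auto
  show "(\<Sum>tau = 1..t. \<Sum>j<n tau. Amat C t tau i j * ?Z tau j) +
          (\<Sum>tau = 1..<t. \<Sum>j<M. Bmat C t tau i j * g tau j) \<le> bvec C t i"
    using le unfolding e1 e2 sum_split_last[OF t1] by linarith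
qed

lemma Z_eq:
  assumes y: "is_policy T M n y" and g: "good T M g" and s: "sat3 T M n C y g"
  shows "k \<le> T \<Longrightarrow> \<forall>tau\<in>{1..k}. zacc M n C y g tau tau = y tau (hist g tau)"
proof (induction k)
  case 0
  then show ?case by simp
next
  case (Suc k)
  have IH: "\<forall>tau\<in>{1..k}. zacc M n C y g tau tau = y tau (hist g tau)" using Suc by simp
  let ?t = "Suc k"
  have t: "?t \<in> {1..T}" using Suc.prems by auto
  have yv: "y ?t (hist g ?t) \<in> vec_space (n ?t)"
    using y_vec[OF y t hist_space[OF g]] Suc.prems by auto
  have inX: "y ?t (hist g ?t) \<in> Xset M n C ?t (zacc M n C y g k) (hist g ?t)"
    unfolding Xset_def
  proof (intro CollectI conjI yv allI impI)
    fix i assume i: "i < rows C ?t"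
    have sat: "(\<Sum>tau\<in>{1..?t}. \<Sum>j<n tau. Amat C ?t tau i j * y tau (hist g tau) j)
     + (\<Sum>tau\<in>{1..<?t}. \<Sum>j<M. Bmat C ?t tau i j * g tau j) \<le> bvec C ?t i"
      using s t i unfolding sat3_def by blast
    have e1: "(\<Sum>tau\<in>{1..<?t}. \<Sum>j<M. Bmat C ?t tau i j * hist g ?t tau j)
          = (\<Sum>tau\<in>{1..<?t}. \<Sum>j<M. Bmat C ?t tau i j * g tau j)"
      by (intro sum.cong refl) (simp add: hist_at)
    have e2: "(\<Sum>tau\<in>{1..<?t}. \<Sum>j<n tau. Amat C ?t tau i j * zacc M n C y g k tau j)
          = (\<Sum>tau\<in>{1..<?t}. \<Sum>j<n tau. Amat C ?t tau i j * y tau (hist g tau) j)"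
    proof (intro sum.cong refl)
      fix tau j assume "tau \<in> {1..<?t}"
      hence "zacc M n C y g k tau = zacc M n C y g tau tau" by (intro zacc_stable) auto
      also have "\<dots> = y tau (hist g tau)" using IH \<open>tau \<in> {1..<?t}\<close> by auto
      finally show "Amat C ?t tau i j * zacc M n C y g k tau j = Amat C ?t tau i j * y tau (hist g tau) j"
        by simp
    qed
    have t1: "1 \<le> ?t" by simp
    show "(\<Sum>j<n ?t. Amat C ?t ?t i j * y ?t (hist g ?t) j) \<le> bvec C ?t i
       - (\<Sum>tau\<in>{1..<?t}. \<Sum>j<M. Bmat C ?t tau i j * hist g ?t tau j)
       - (\<Sum>tau\<in>{1..<?t}. \<Sum>j<n tau. Amat C ?t tau i j * zacc M n C y g k tau j)"
      using sat unfolding e1 e2 sum_split_last[OF t1] by linarith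
  qed
  have sub: "Xset M n C ?t (zacc M n C y g k) (hist g ?t) \<subseteq> vec_space (n ?t)"
    unfolding Xset_def by auto
  have "zacc M n C y g ?t ?t = proj (n ?t) (Xset M n C ?t (zacc M n C y g k) (hist g ?t)) (y ?t (hist g ?t))"
    by (simp only: zacc.simps fun_upd_same)
  also have "\<dots> = y ?t (hist g ?t)" by (rule proj_self[OF sub inX])
  finally have last: "zacc M n C y g ?t ?t = y ?t (hist g ?t)" .
  show ?case
  proof
    fix tau assume tau: "tau \<in> {1..Suc k}"
    show "zacc M n C y g tau tau = y tau (hist g tau)"
    proof (cases "tau = Suc k")
      case True thus ?thesis using last by simp
    next
      case False hence "tau \<in> {1..k}" using tau by auto
      thus ?thesis using IH by blast
    qed
  qed
qed

lemma sat2_cong: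
  assumes "\<forall>tau\<in>{1..T}. y tau (hist g tau) = z tau (hist g tau)"
  shows "sat2 T M n C y g = sat2 T M n C z g" "sat3 T M n C y g = sat3 T M n C z g"
proof -
  have e: "(\<Sum>tau\<in>{1..t}. \<Sum>j<n tau. Amat C t tau i j * y tau (hist g tau) j)
        = (\<Sum>tau\<in>{1..t}. \<Sum>j<n tau. Amat C t tau i j * z tau (hist g tau) j)" if "t \<in> {1..T}" for t i
    using assms that by (intro sum.cong refl) auto
  show "sat2 T M n C y g = sat2 T M n C z g" unfolding sat2_def
    apply (intro ball_cong[OF refl] arg_cong[where f=All] ext)
    apply (simp only: e)
    done
  show "sat3 T M n C y g = sat3 T M n C z g" unfolding sat3_def
    apply (intro ball_cong[OF refl] arg_cong[where f=All] ext)
    apply (simp only: e)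
    done
qed




lemma comp_vec: "j < k \<Longrightarrow> (\<lambda>x. x j) \<in> vec_M k \<rightarrow>\<^sub>M borel"
  unfolding vec_M_def by (rule measurable_component_singleton) auto

lemma meas_xi:
  assumes xi: "xi \<in> P \<rightarrow>\<^sub>M (\<Pi>\<^sub>M tau\<in>{1..T}. vec_M M)" and tau: "tau \<in> {1..T}"
  shows "(\<lambda>\<omega>. xi \<omega> tau) \<in> P \<rightarrow>\<^sub>M vec_M M"
  using measurable_compose[OF xi measurable_component_singleton[OF tau]] by simp

lemma meas_hist:
  assumes xi: "xi \<in> P \<rightarrow>\<^sub>M (\<Pi>\<^sub>M tau\<in>{1..T}. vec_M M)" and t: "t \<in> {1..T}"
  shows "(\<lambda>\<omega>. hist (xi \<omega>) t) \<in> P \<rightarrow>\<^sub>M hist_M M t"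
  unfolding hist_def hist_M_def
  by (rule measurable_restrict, rule meas_xi[OF xi]) (use t in auto)

lemma meas_Yj:
  assumes y: "is_policy T M n y" and xi: "xi \<in> P \<rightarrow>\<^sub>M (\<Pi>\<^sub>M tau\<in>{1..T}. vec_M M)"
    and t: "t \<in> {1..T}" and j: "j < n t"
  shows "(\<lambda>\<omega>. y t (hist (xi \<omega>) t) j) \<in> borel_measurable P"
proof -
  have "(\<lambda>\<omega>. y t (hist (xi \<omega>) t)) \<in> P \<rightarrow>\<^sub>M vec_M (n t)"
    using measurable_compose[OF meas_hist[OF xi t]] y t unfolding is_policy_def by blast
  from measurable_compose[OF this comp_vec[OF j]]
  show ?thesis by simp
qed

lemma meas_xij:
  assumes xi: "xi \<in> P \<rightarrow>\<^sub>M (\<Pi>\<^sub>M tau\<in>{1..T}. vec_M M)" and t: "t \<in> {1..T}" and j: "j < M"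
  shows "(\<lambda>\<omega>. xi \<omega> t j) \<in> borel_measurable P"
  using measurable_compose[OF meas_xi[OF xi t] comp_vec[OF j]] by simp

lemma sat_sets:
  assumes y: "is_policy T M n y" and xi: "xi \<in> P \<rightarrow>\<^sub>M (\<Pi>\<^sub>M tau\<in>{1..T}. vec_M M)"
  shows "{\<omega>\<in>space P. sat2 T M n C y (xi \<omega>)} \<in> sets P"
    "{\<omega>\<in>space P. sat3 T M n C y (xi \<omega>)} \<in> sets P"
proof -
  have L: "(\<lambda>\<omega>. (\<Sum>tau\<in>{1..t}. \<Sum>j<n tau. Amat C t tau i j * y tau (hist (xi \<omega>) tau) j))
     \<in> borel_measurable P" if t: "t \<in> {1..T}" for t i
    by (intro borel_measurable_sum borel_measurable_times borel_measurable_const meas_Yj[OF y xi])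
      (use t in auto)
  have B2: "(\<lambda>\<omega>. (\<Sum>tau\<in>{1..t}. \<Sum>j<M. Bmat C t tau i j * xi \<omega> tau j)) \<in> borel_measurable P"
    if t: "t \<in> {1..T}" for t i
    by (intro borel_measurable_sum borel_measurable_times borel_measurable_const meas_xij[OF xi])
      (use t in auto)
  have B3: "(\<lambda>\<omega>. (\<Sum>tau\<in>{1..<t}. \<Sum>j<M. Bmat C t tau i j * xi \<omega> tau j)) \<in> borel_measurable P"
    if t: "t \<in> {1..T}" for t i
    by (intro borel_measurable_sum borel_measurable_times borel_measurable_const meas_xij[OF xi])
      (use t in auto)
  have "{\<omega>\<in>space P. sat2 T M n C y (xi \<omega>)} = {\<omega>\<in>space P. \<forall>t\<in>{1..T}. \<forall>i\<in>{..<rows C t}.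
     (\<Sum>tau\<in>{1..t}. \<Sum>j<n tau. Amat C t tau i j * y tau (hist (xi \<omega>) tau) j)
     + (\<Sum>tau\<in>{1..t}. \<Sum>j<M. Bmat C t tau i j * xi \<omega> tau j) \<le> bvec C t i}"
    unfolding sat2_def by auto
  also have "\<dots> \<in> sets P"
    by (intro sets.sets_Collect_finite_All borel_measurable_le borel_measurable_add L B2
        borel_measurable_const) auto
  finally show "{\<omega>\<in>space P. sat2 T M n C y (xi \<omega>)} \<in> sets P" .
  have "{\<omega>\<in>space P. sat3 T M n C y (xi \<omega>)} = {\<omega>\<in>space P. \<forall>t\<in>{1..T}. \<forall>i\<in>{..<rows C t}.
     (\<Sum>tau\<in>{1..t}. \<Sum>j<n tau. Amat C t tau i j * y tau (hist (xi \<omega>) tau) j)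
     + (\<Sum>tau\<in>{1..<t}. \<Sum>j<M. Bmat C t tau i j * xi \<omega> tau j) \<le> bvec C t i}"
    unfolding sat3_def by auto
  also have "\<dots> \<in> sets P"
    by (intro sets.sets_Collect_finite_All borel_measurable_le borel_measurable_add L B3
        borel_measurable_const) auto
  finally show "{\<omega>\<in>space P. sat3 T M n C y (xi \<omega>)} \<in> sets P" .
qed

lemma good_xi:
  assumes xi: "xi \<in> P \<rightarrow>\<^sub>M (\<Pi>\<^sub>M tau\<in>{1..T}. vec_M M)" and w: "\<omega> \<in> space P"
  shows "good T M (xi \<omega>)"
  using measurable_space[OF xi w] unfolding good_def by (auto simp: space_PiM space_vec_M)




lemma key1:
  assumes P: "prob_space P"
    and xi: "xi \<in> P \<rightarrow>\<^sub>M (\<Pi>\<^sub>M tau\<in>{1..T}. vec_M M)"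
    and ne: "\<forall>t\<in>{1..T}. \<forall>z h. (\<forall>tau\<in>{1..<t}. z tau \<in> vec_space (n tau))
           \<longrightarrow> h \<in> space (hist_M M t) \<longrightarrow> Xset M n C3 t z h \<noteq> {}"
    and pol: "\<forall>y. is_policy T M n y \<longrightarrow> is_policy T M n (PiOp M n C3 y)"
    and y: "y \<in> M2set T M n C2 C3 P xi p"
  shows "PiOp M n C3 y \<in> M1set T M n C2 C3 P xi p"
proof -
  interpret prob_space P by (rule P)
  have yp: "is_policy T M n y" and ym: "measure P {\<omega> \<in> space P. sat2 T M n C2 y (xi \<omega>) \<and> sat3 T M n C3 y (xi \<omega>)} \<ge> p"
    using y unfolding M2set_def by auto
  have zp: "is_policy T M n (PiOp M n C3 y)" using pol yp by blast
  have sub: "{\<omega> \<in> space P. sat2 T M n C2 y (xi \<omega>) \<and> sat3 T M n C3 y (xi \<omega>)}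
      \<subseteq> {\<omega> \<in> space P. sat2 T M n C2 (PiOp M n C3 y) (xi \<omega>)}"
  proof safe
    fix \<omega> assume w: "\<omega> \<in> space P" and s2: "sat2 T M n C2 y (xi \<omega>)" and s3: "sat3 T M n C3 y (xi \<omega>)"
    have g: "good T M (xi \<omega>)" by (rule good_xi[OF xi w])
    have "\<forall>tau\<in>{1..T}. y tau (hist (xi \<omega>) tau) = PiOp M n C3 y tau (hist (xi \<omega>) tau)"
      using Z_eq[OF yp g s3, of T] by (simp add: PiOp_eval)
    thus "sat2 T M n C2 (PiOp M n C3 y) (xi \<omega>)" using sat2_cong(1) s2 by metis
  qed
  have "p \<le> measure P {\<omega> \<in> space P. sat2 T M n C2 (PiOp M n C3 y) (xi \<omega>)}"
    using ym finite_measure_mono[OF sub sat_sets(1)[OF zp xi]] by linarith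
  moreover have "AE \<omega> in P. sat3 T M n C3 (PiOp M n C3 y) (xi \<omega>)"
    by (rule AE_I2) (rule sat3_PiOp[OF ne good_xi[OF xi]])
  ultimately show ?thesis using zp unfolding M1set_def by auto
qed

lemma key2:
  assumes P: "prob_space P"
    and xi: "xi \<in> P \<rightarrow>\<^sub>M (\<Pi>\<^sub>M tau\<in>{1..T}. vec_M M)"
    and y: "y \<in> M1set T M n C2 C3 P xi p"
  shows "y \<in> M2set T M n C2 C3 P xi p \<and> ae_eq_policy T P xi y (PiOp M n C3 y)"
proof -
  interpret prob_space P by (rule P)
  have yp: "is_policy T M n y" and ym: "measure P {\<omega> \<in> space P. sat2 T M n C2 y (xi \<omega>)} \<ge> p"
    and ae: "AE \<omega> in P. sat3 T M n C3 y (xi \<omega>)"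
    using y unfolding M1set_def by auto
  have "measure P {\<omega> \<in> space P. sat2 T M n C2 y (xi \<omega>) \<and> sat3 T M n C3 y (xi \<omega>)}
      = measure P {\<omega> \<in> space P. sat2 T M n C2 y (xi \<omega>)}"
  proof (rule measure_eq_AE)
    show "AE x in P. (x \<in> {\<omega> \<in> space P. sat2 T M n C2 y (xi \<omega>) \<and> sat3 T M n C3 y (xi \<omega>)}) =
        (x \<in> {\<omega> \<in> space P. sat2 T M n C2 y (xi \<omega>)})"
      using ae by eventually_elim auto
    have "{\<omega> \<in> space P. sat2 T M n C2 y (xi \<omega>) \<and> sat3 T M n C3 y (xi \<omega>)}
       = {\<omega> \<in> space P. sat2 T M n C2 y (xi \<omega>)} \<inter> {\<omega> \<in> space P. sat3 T M n C3 y (xi \<omega>)}" by auto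
    thus "{\<omega> \<in> space P. sat2 T M n C2 y (xi \<omega>) \<and> sat3 T M n C3 y (xi \<omega>)} \<in> sets P"
      using sat_sets[OF yp xi] by auto
    show "{\<omega> \<in> space P. sat2 T M n C2 y (xi \<omega>)} \<in> sets P" using sat_sets[OF yp xi] by auto
  qed
  hence m2: "y \<in> M2set T M n C2 C3 P xi p" using ym yp unfolding M2set_def by auto
  have "AE \<omega> in P. y t (hist (xi \<omega>) t) = PiOp M n C3 y t (hist (xi \<omega>) t)" if t: "t \<in> {1..T}" for t
    using ae AE_space
  proof eventually_elim
    case (elim \<omega>)
    have g: "good T M (xi \<omega>)" by (rule good_xi[OF xi elim(2)])
    show ?case using Z_eq[OF yp g elim(1), of T] t by (simp add: PiOp_eval)
  qed
  thus ?thesis using m2 unfolding ae_eq_policy_def by auto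
qed


theorem lemma2p1:
  fixes T M :: nat and n :: "nat \<Rightarrow> nat" and C2 C3 :: csys
    and P :: "'a measure" and xi :: "'a \<Rightarrow> nat \<Rightarrow> nat \<Rightarrow> real" and p :: real
    and K :: "policy set"
  assumes "T \<ge> 2" and "M \<ge> 1" and "\<forall>t\<in>{1..T}. n t \<ge> 1"
    and "prob_space P"
    and "xi \<in> P \<rightarrow>\<^sub>M (\<Pi>\<^sub>M tau\<in>{1..T}. vec_M M)"
    and "\<forall>t\<in>{1..T}. \<forall>i<rows C3 t. \<forall>j<M. Bmat C3 t t i j = 0"
    and "0 < p" and "p \<le> 1"
    and "\<forall>t\<in>{1..T}. \<forall>z h. (\<forall>tau\<in>{1..<t}. z tau \<in> vec_space (n tau))
           \<longrightarrow> h \<in> space (hist_M M t) \<longrightarrow> Xset M n C3 t z h \<noteq> {}"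
    and "\<forall>y. is_policy T M n y \<longrightarrow> is_policy T M n (PiOp M n C3 y)"
    and "K \<subseteq> {y. is_policy T M n y}"
  shows "ae_subset T P xi (M1set T M n C2 C3 P xi p \<inter> K)
            (PiOp M n C3 ` (M2set T M n C2 C3 P xi p \<inter> K))
       \<and> PiOp M n C3 ` (M2set T M n C2 C3 P xi p \<inter> K)
            \<subseteq> M1set T M n C2 C3 P xi p \<inter> PiOp M n C3 ` K
       \<and> M1set T M n C2 C3 P xi p \<inter> PiOp M n C3 ` K \<subseteq> M1set T M n C2 C3 P xi p
       \<and> PiOp M n C3 ` M2set T M n C2 C3 P xi p \<subseteq> M1set T M n C2 C3 P xi p
       \<and> ae_subset T P xi (M1set T M n C2 C3 P xi p) (PiOp M n C3 ` M2set T M n C2 C3 P xi p)"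
  proof -
  have k1: "PiOp M n C3 y \<in> M1set T M n C2 C3 P xi p" if "y \<in> M2set T M n C2 C3 P xi p" for y
    using key1[OF assms(4) assms(5) assms(9) assms(10) that] .
  have k2: "y \<in> M2set T M n C2 C3 P xi p \<and> ae_eq_policy T P xi y (PiOp M n C3 y)"
    if "y \<in> M1set T M n C2 C3 P xi p" for y
    using key2[OF assms(4) assms(5) that] .
  have p1: "ae_subset T P xi (M1set T M n C2 C3 P xi p \<inter> K)
            (PiOp M n C3 ` (M2set T M n C2 C3 P xi p \<inter> K))"
    unfolding ae_subset_def
  proof
    fix y assume "y \<in> M1set T M n C2 C3 P xi p \<inter> K"
    thus "\<exists>z\<in>PiOp M n C3 ` (M2set T M n C2 C3 P xi p \<inter> K). ae_eq_policy T P xi y z"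
      using k2 by blast
  qed
  have p5: "ae_subset T P xi (M1set T M n C2 C3 P xi p) (PiOp M n C3 ` M2set T M n C2 C3 P xi p)"
    unfolding ae_subset_def
  proof
    fix y assume "y \<in> M1set T M n C2 C3 P xi p"
    thus "\<exists>z\<in>PiOp M n C3 ` M2set T M n C2 C3 P xi p. ae_eq_policy T P xi y z"
      using k2 by blast
  qed
  show ?thesis using p1 p5 k1 by blast
qed

end
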